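(* Let $L$ be a finite-dimensional solvable Lie algebra over an arbitrary field $F$ and let $U$ be a proper subalgebra of $L$. Then the following are equivalent: (i) $U$ is modular in $L$; (ii) $U$ is semi-modular in $L$; (iii) $U$ is a quasi-ideal of $L$.
   Context: For subalgebras $U,B$ of a Lie algebra $L$, $\langle U,B\rangle$ denotes the subalgebra generated by $U\cup B$. A subalgebra $B$ covers a subalgebra $A$ if $A$ is a maximal subalgebra of $B$. A subalgebra $U$ of $L$ is modular in $L$ if $\langle U,B\rangle\cap C=\langle B,U\cap C\rangle$ for all subalgebras $B\subseteq C$ of $L$, and $\langle U,B\rangle\cap C=\langle B\cap C,U\rangle$ for all subalgebras $B,C$ of $L$ with $U\subseteq C$. $U$ is upper modular (um) in $L$ if whenever $B$ is a subalgebra of $L$ which covers $U\cap B$, then $\langle U,B\rangle$ covers $U$; $U$ is lower modular (lm) in $L$ if whenever $B$ is a subalgebra of $L$ such that $\langle U,B\rangle$ covers $U$, then $B$ covers $U\cap B$; $U$ is semi-modular (sm) in $L$ if it is both um and lm in $L$. A subalgebra $Q$ of $L$ is a quasi-ideal of $L$ if $[Q,V]\subseteq Q+V$ for every subspace $V$ of $L$. *)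

theory Defs
  imports Main "HOL.Vector_Spaces"
begin

text \<open>A Lie algebra over a field: vector space structure given by the scalar
multiplication s on the ambient type 'v (the whole type is the Lie algebra L),
with a bilinear, alternating bracket satisfying the Jacobi identity.\<close>

definition lie_algebra :: "('k::field \<Rightarrow> 'v::ab_group_add \<Rightarrow> 'v) \<Rightarrow> ('v \<Rightarrow> 'v \<Rightarrow> 'v) \<Rightarrow> bool" where
  "lie_algebra s br \<longleftrightarrow> Vector_Spaces.vector_space s
     \<and> (\<forall>x. Vector_Spaces.linear s s (br x)) \<and> (\<forall>y. Vector_Spaces.linear s s (\<lambda>x. br x y))
     \<and> (\<forall>x. br x x = 0)
     \<and> (\<forall>x y z. br x (br y z) + br y (br z x) + br z (br x y) = 0)"

definition fin_dim :: "('k::field \<Rightarrow> 'v::ab_group_add \<Rightarrow> 'v) \<Rightarrow> bool" where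
  "fin_dim s \<longleftrightarrow> (\<exists>B. finite B \<and> module.span s B = UNIV)"

fun derived_series :: "('k::field \<Rightarrow> 'v::ab_group_add \<Rightarrow> 'v) \<Rightarrow> ('v \<Rightarrow> 'v \<Rightarrow> 'v) \<Rightarrow> nat \<Rightarrow> 'v set" where
  "derived_series s br 0 = UNIV"
| "derived_series s br (Suc n) =
     module.span s {br x y | x y. x \<in> derived_series s br n \<and> y \<in> derived_series s br n}"

definition solvable_lie :: "('k::field \<Rightarrow> 'v::ab_group_add \<Rightarrow> 'v) \<Rightarrow> ('v \<Rightarrow> 'v \<Rightarrow> 'v) \<Rightarrow> bool" where
  "solvable_lie s br \<longleftrightarrow> (\<exists>n. derived_series s br n = {0})"

definition lie_subalgebra :: "('k::field \<Rightarrow> 'v::ab_group_add \<Rightarrow> 'v) \<Rightarrow> ('v \<Rightarrow> 'v \<Rightarrow> 'v) \<Rightarrow> 'v set \<Rightarrow> bool" where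
  "lie_subalgebra s br A \<longleftrightarrow> module.subspace s A \<and> (\<forall>x\<in>A. \<forall>y\<in>A. br x y \<in> A)"

definition gen :: "('k::field \<Rightarrow> 'v::ab_group_add \<Rightarrow> 'v) \<Rightarrow> ('v \<Rightarrow> 'v \<Rightarrow> 'v) \<Rightarrow> 'v set \<Rightarrow> 'v set" where
  "gen s br X = \<Inter>{A. lie_subalgebra s br A \<and> X \<subseteq> A}"

definition covers :: "('k::field \<Rightarrow> 'v::ab_group_add \<Rightarrow> 'v) \<Rightarrow> ('v \<Rightarrow> 'v \<Rightarrow> 'v) \<Rightarrow> 'v set \<Rightarrow> 'v set \<Rightarrow> bool" where
  "covers s br B A \<longleftrightarrow> lie_subalgebra s br A \<and> lie_subalgebra s br B \<and> A \<subset> B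
     \<and> (\<forall>C. lie_subalgebra s br C \<and> A \<subseteq> C \<and> C \<subseteq> B \<longrightarrow> C = A \<or> C = B)"

definition modular :: "('k::field \<Rightarrow> 'v::ab_group_add \<Rightarrow> 'v) \<Rightarrow> ('v \<Rightarrow> 'v \<Rightarrow> 'v) \<Rightarrow> 'v set \<Rightarrow> bool" where
  "modular s br U \<longleftrightarrow>
     (\<forall>B C. lie_subalgebra s br B \<and> lie_subalgebra s br C \<and> B \<subseteq> C \<longrightarrow>
        gen s br (U \<union> B) \<inter> C = gen s br (B \<union> (U \<inter> C)))
   \<and> (\<forall>B C. lie_subalgebra s br B \<and> lie_subalgebra s br C \<and> U \<subseteq> C \<longrightarrow>
        gen s br (U \<union> B) \<inter> C = gen s br ((B \<inter> C) \<union> U))"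

definition upper_modular :: "('k::field \<Rightarrow> 'v::ab_group_add \<Rightarrow> 'v) \<Rightarrow> ('v \<Rightarrow> 'v \<Rightarrow> 'v) \<Rightarrow> 'v set \<Rightarrow> bool" where
  "upper_modular s br U \<longleftrightarrow>
     (\<forall>B. lie_subalgebra s br B \<and> covers s br B (U \<inter> B) \<longrightarrow> covers s br (gen s br (U \<union> B)) U)"

definition lower_modular :: "('k::field \<Rightarrow> 'v::ab_group_add \<Rightarrow> 'v) \<Rightarrow> ('v \<Rightarrow> 'v \<Rightarrow> 'v) \<Rightarrow> 'v set \<Rightarrow> bool" where
  "lower_modular s br U \<longleftrightarrow>
     (\<forall>B. lie_subalgebra s br B \<and> covers s br (gen s br (U \<union> B)) U \<longrightarrow> covers s br B (U \<inter> B))"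

definition semi_modular :: "('k::field \<Rightarrow> 'v::ab_group_add \<Rightarrow> 'v) \<Rightarrow> ('v \<Rightarrow> 'v \<Rightarrow> 'v) \<Rightarrow> 'v set \<Rightarrow> bool" where
  "semi_modular s br U \<longleftrightarrow> upper_modular s br U \<and> lower_modular s br U"

definition quasi_ideal :: "('k::field \<Rightarrow> 'v::ab_group_add \<Rightarrow> 'v) \<Rightarrow> ('v \<Rightarrow> 'v \<Rightarrow> 'v) \<Rightarrow> 'v set \<Rightarrow> bool" where
  "quasi_ideal s br Q \<longleftrightarrow> lie_subalgebra s br Q \<and>
     (\<forall>V. module.subspace s V \<longrightarrow>
        module.span s {br q v | q v. q \<in> Q \<and> v \<in> V} \<subseteq> {q + v | q v. q \<in> Q \<and> v \<in> V})"

end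

theory Submission imports Defs begin

locale lie_ctx =
  fixes s :: "'k::field \<Rightarrow> 'v::ab_group_add \<Rightarrow> 'v" and br :: "'v \<Rightarrow> 'v \<Rightarrow> 'v"
  assumes lie: "lie_algebra s br"
begin

sublocale vector_space s using lie unfolding lie_algebra_def by auto

lemma br_add_r: "br x (y + z) = br x y + br x z"
  using lie unfolding lie_algebra_def linear_iff by auto
lemma br_add_l: "br (x + y) z = br x z + br y z"
  using lie unfolding lie_algebra_def linear_iff by auto
lemma br_scale_r: "br x (s c y) = s c (br x y)"
  using lie unfolding lie_algebra_def linear_iff by auto
lemma br_scale_l: "br (s c x) y = s c (br x y)"
  using lie unfolding lie_algebra_def linear_iff by auto
lemma br_alt: "br x x = 0"
  using lie unfolding lie_algebra_def by auto
lemma br_jac: "br x (br y z) + br y (br z x) + br z (br x y) = 0"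
  using lie unfolding lie_algebra_def by auto
lemma br_0_r[simp]: "br x 0 = 0"
  using br_add_r[of x 0 0] by simp
lemma br_0_l[simp]: "br 0 x = 0"
  using br_add_l[of 0 0 x] by simp
lemma br_anti: "br x y = - br y x"
proof -
  have "br (x + y) (x + y) = br x x + br y x + (br x y + br y y)" by (simp only: br_add_l br_add_r)
  then have "br x y + br y x = 0" by (simp add: br_alt add.commute)
  then show ?thesis by (metis eq_neg_iff_add_eq_0)
qed
lemma br_neg_r: "br x (- y) = - br x y"
proof -
  have "br x (- y) + br x y = 0" by (simp add: br_add_r[symmetric])
  then show ?thesis by (simp add: eq_neg_iff_add_eq_0)
qed
lemma br_neg_l: "br (- x) y = - br x y"
proof -
  have "br (- x) y + br x y = 0" by (simp add: br_add_l[symmetric])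
  then show ?thesis by (simp add: eq_neg_iff_add_eq_0)
qed
lemma br_derivation: "br m (br x y) = br (br m x) y + br x (br m y)"
proof -
  have "br m (br x y) + br x (br y m) + br y (br m x) = 0" by (rule br_jac)
  moreover have "br x (br y m) = - br x (br m y)" using br_anti[of y m] br_neg_r by simp
  moreover have "br y (br m x) = - br (br m x) y" by (rule br_anti)
  ultimately show ?thesis by (simp add: algebra_simps eq_neg_iff_add_eq_0)
qed

lemma preimage_subspace: "subspace T \<Longrightarrow> subspace {z. br m z \<in> T}"
  unfolding subspace_def by (auto simp: br_add_r br_scale_r)

lemma derived_subspace: "subspace (derived_series s br k)"
  by (cases k) auto

lemma derived_ideal: "d \<in> derived_series s br k \<Longrightarrow> br m d \<in> derived_series s br k"
proof (induction k arbitrary: m d)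
  case 0 then show ?case by simp
next
  case (Suc k)
  let ?G = "{br x y | x y. x \<in> derived_series s br k \<and> y \<in> derived_series s br k}"
  have "?G \<subseteq> {z. br m z \<in> span ?G}"
  proof
    fix z assume "z \<in> ?G"
    then obtain x y where z: "z = br x y" "x \<in> derived_series s br k" "y \<in> derived_series s br k" by blast
    have "br m x \<in> derived_series s br k" using z(2) by (rule Suc.IH)
    then have 1: "br (br m x) y \<in> ?G" using z(3) by blast
    have "br m y \<in> derived_series s br k" using z(3) by (rule Suc.IH)
    then have 2: "br x (br m y) \<in> ?G" using z(2) by blast
    have "br (br m x) y + br x (br m y) \<in> span ?G"
      by (rule span_add[OF span_base[OF 1] span_base[OF 2]])
    then show "z \<in> {z. br m z \<in> span ?G}"
      using z(1) br_derivation[of m x y] by simp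
  qed
  then have "span ?G \<subseteq> {z. br m z \<in> span ?G}"
    by (rule span_minimal[OF _ preimage_subspace[OF subspace_span]])
  moreover have "d \<in> span ?G" using Suc.prems by simp
  ultimately show ?case by auto
qed

lemma derived_step: "x \<in> derived_series s br k \<Longrightarrow> y \<in> derived_series s br k \<Longrightarrow> br x y \<in> derived_series s br (Suc k)"
  by (auto intro!: span_base)

lemma sub_UNIV: "lie_subalgebra s br UNIV"
  unfolding lie_subalgebra_def by simp

lemma sub_Int: "lie_subalgebra s br A \<Longrightarrow> lie_subalgebra s br B \<Longrightarrow> lie_subalgebra s br (A \<inter> B)"
  unfolding lie_subalgebra_def subspace_def by auto

lemma gen_sub: "lie_subalgebra s br (gen s br X)"
  unfolding lie_subalgebra_def gen_def subspace_def by auto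

lemma gen_incl: "X \<subseteq> gen s br X"
  unfolding gen_def by auto

lemma gen_least: "lie_subalgebra s br A \<Longrightarrow> X \<subseteq> A \<Longrightarrow> gen s br X \<subseteq> A"
  unfolding gen_def by auto

lemma gen_id: "lie_subalgebra s br A \<Longrightarrow> gen s br A = A"
  by (meson gen_incl gen_least order_refl subset_antisym)

lemma gen_mono: "X \<subseteq> Y \<Longrightarrow> gen s br X \<subseteq> gen s br Y"
  by (meson gen_incl gen_least gen_sub order_trans)

lemma sub_subspace: "lie_subalgebra s br A \<Longrightarrow> subspace A"
  unfolding lie_subalgebra_def by auto


lemma preimage_subspace_l: "subspace T \<Longrightarrow> subspace {w. br w z \<in> T}"
  unfolding subspace_def by (auto simp: br_add_l br_scale_l)

lemma span_closed:
  assumes gens: "\<And>w t. w \<in> X \<Longrightarrow> t \<in> X \<Longrightarrow> br w t \<in> span X"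
  shows "lie_subalgebra s br (span X)"
proof -
  have 1: "br w t \<in> span X" if w: "w \<in> X" and t: "t \<in> span X" for w t
  proof -
    have "X \<subseteq> {t. br w t \<in> span X}" using gens w by auto
    then have "span X \<subseteq> {t. br w t \<in> span X}"
      by (intro span_minimal preimage_subspace) auto
    then show ?thesis using t by auto
  qed
  have "X \<subseteq> {w. \<forall>t\<in>span X. br w t \<in> span X}" using 1 by auto
  moreover have "subspace {w. \<forall>t\<in>span X. br w t \<in> span X}"
  proof -
    have "{w. \<forall>t\<in>span X. br w t \<in> span X} = (\<Inter>t\<in>span X. {w. br w t \<in> span X})" by auto
    moreover have "subspace (\<Inter>t\<in>span X. {w. br w t \<in> span X})"
      by (intro subspace_Int preimage_subspace_l) auto
    ultimately show ?thesis by simp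
  qed
  ultimately have "span X \<subseteq> {w. \<forall>t\<in>span X. br w t \<in> span X}" by (rule span_minimal)
  then show ?thesis unfolding lie_subalgebra_def by auto
qed

lemma sub_closed: "lie_subalgebra s br A \<Longrightarrow> x \<in> A \<Longrightarrow> y \<in> A \<Longrightarrow> br x y \<in> A"
  unfolding lie_subalgebra_def by auto

lemma sum_left: "subspace B \<Longrightarrow> U \<subseteq> {u + b | u b. u \<in> U \<and> b \<in> B}"
  using subspace_0[of B] by (metis (mono_tags, lifting) add_0_right mem_Collect_eq subsetI)
lemma sum_right: "subspace U \<Longrightarrow> B \<subseteq> {u + b | u b. u \<in> U \<and> b \<in> B}"
  using subspace_0[of U] by (metis (mono_tags, lifting) add_0_left mem_Collect_eq subsetI)

lemma qi_sum_sub: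
  assumes qi: "quasi_ideal s br U" and B: "lie_subalgebra s br B"
  shows "lie_subalgebra s br {u + b | u b. u \<in> U \<and> b \<in> B}" (is "lie_subalgebra s br ?P")
proof -
  have U: "lie_subalgebra s br U" using qi unfolding quasi_ideal_def by auto
  have sU: "subspace U" and sB: "subspace B" using U B sub_subspace by auto
  have sP: "subspace ?P" by (rule subspace_sums[OF sU sB])
  have cross: "br u b \<in> ?P" if "u \<in> U" "b \<in> B" for u b
  proof -
    have "br u b \<in> span {br q v | q v. q \<in> U \<and> v \<in> B}" using that by (blast intro: span_base)
    moreover have "span {br q v | q v. q \<in> U \<and> v \<in> B} \<subseteq> ?P"
      using qi sB unfolding quasi_ideal_def by (simp only:)
    ultimately show ?thesis by (rule subsetD[rotated])
  qed
  have UP: "U \<subseteq> ?P"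
  proof
    fix u assume "u \<in> U" then show "u \<in> ?P" using subspace_0[OF sB] by (metis (mono_tags, lifting) add_0_right mem_Collect_eq)
  qed
  have BP: "B \<subseteq> ?P"
  proof
    fix b assume "b \<in> B" then show "b \<in> ?P" using subspace_0[OF sU] by (metis (mono_tags, lifting) add_0_left mem_Collect_eq)
  qed
  have "br x y \<in> ?P" if hx: "x \<in> ?P" and hy: "y \<in> ?P" for x y
  proof -
    obtain u b where x: "x = u + b" "u \<in> U" "b \<in> B" using hx by blast
    obtain u' b' where y: "y = u' + b'" "u' \<in> U" "b' \<in> B" using hy by blast
    have e: "br b u' = - br u' b" by (rule br_anti)
    have "br x y = (br u u' + br u b') + (br b u' + br b b')"
      unfolding x y br_add_l br_add_r by (simp only: ac_simps)
    then have eq: "br x y = (br u u' + br u b') + (- br u' b + br b b')"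
      unfolding e .
    have 1: "br u u' \<in> ?P" using UP sub_closed[OF U x(2) y(2)] by (rule subsetD)
    have 2: "br b b' \<in> ?P" using BP sub_closed[OF B x(3) y(3)] by (rule subsetD)
    have 3: "br u b' \<in> ?P" by (rule cross[OF x(2) y(3)])
    have 4: "- br u' b \<in> ?P" by (rule subspace_neg[OF sP cross[OF y(2) x(3)]])
    show ?thesis unfolding eq
      by (rule subspace_add[OF sP subspace_add[OF sP 1 3] subspace_add[OF sP 4 2]])
  qed
  then show ?thesis using sP unfolding lie_subalgebra_def by blast
qed

lemma qi_gen:
  assumes qi: "quasi_ideal s br U" and B: "lie_subalgebra s br B"
  shows "gen s br (U \<union> B) = {u + b | u b. u \<in> U \<and> b \<in> B}" (is "?G = ?P")
proof
  have U: "lie_subalgebra s br U" using qi unfolding quasi_ideal_def by auto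
  have sU: "subspace U" and sB: "subspace B" using U B sub_subspace by auto
  have "U \<subseteq> ?P" by (rule sum_left[OF sB])
  moreover have "B \<subseteq> ?P" by (rule sum_right[OF sU])
  ultimately have "U \<union> B \<subseteq> ?P" by (rule Un_least)
  then show "?G \<subseteq> ?P" by (rule gen_least[OF qi_sum_sub[OF qi B]])
  show "?P \<subseteq> ?G"
  proof
    fix z assume "z \<in> ?P"
    then obtain u b where z: "z = u + b" "u \<in> U" "b \<in> B" by blast
    have "u \<in> ?G" using gen_incl[of "U \<union> B"] z(2) by blast
    moreover have "b \<in> ?G" using gen_incl[of "U \<union> B"] z(3) by blast
    ultimately show "z \<in> ?G" unfolding z(1) by (rule subspace_add[OF sub_subspace[OF gen_sub]])
  qed
qed

lemma qi_imp_modular: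
  assumes qi: "quasi_ideal s br U"
  shows "modular s br U"
proof -
  have U: "lie_subalgebra s br U" using qi unfolding quasi_ideal_def by auto
  have sU: "subspace U" using U sub_subspace by auto
  have c1: "gen s br (U \<union> B) \<inter> C = gen s br (B \<union> (U \<inter> C))"
    if B: "lie_subalgebra s br B" and C: "lie_subalgebra s br C" and BC: "B \<subseteq> C" for B C
  proof
    let ?P = "{u + b | u b. u \<in> U \<and> b \<in> B}"
    let ?R = "gen s br (B \<union> (U \<inter> C))"
    have G: "gen s br (U \<union> B) = ?P" by (rule qi_gen[OF qi B])
    have sB: "subspace B" and sC: "subspace C" using B C sub_subspace by auto
    have "B \<union> (U \<inter> C) \<subseteq> ?P \<inter> C"
    proof -
      have "U \<subseteq> ?P" by (rule sum_left[OF sB])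
      moreover have "B \<subseteq> ?P" by (rule sum_right[OF sU])
      ultimately show ?thesis using BC by blast
    qed
    then have "?R \<subseteq> ?P \<inter> C"
      using gen_least[OF sub_Int[OF qi_sum_sub[OF qi B] C]] by blast
    then show "?R \<subseteq> gen s br (U \<union> B) \<inter> C" unfolding G .
    show "gen s br (U \<union> B) \<inter> C \<subseteq> ?R"
    proof
      fix z assume "z \<in> gen s br (U \<union> B) \<inter> C"
      then have zP: "z \<in> ?P" and zC: "z \<in> C" unfolding G by auto
      from zP obtain u b where z0: "z = u + b" "u \<in> U" "b \<in> B" by blast
      note z = z0 zC
      have bC: "b \<in> C" using BC z(3) by blast
      have "u + b - b \<in> C" using subspace_diff[OF sC z(4) bC] z(1) by simp
      then have uC: "u \<in> C" by simp
      have "u \<in> ?R" using gen_incl[of "B \<union> (U \<inter> C)"] z(2) uC by blast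
      moreover have "b \<in> ?R" using gen_incl[of "B \<union> (U \<inter> C)"] z(3) by blast
      ultimately show "z \<in> ?R" unfolding z(1) by (rule subspace_add[OF sub_subspace[OF gen_sub]])
    qed
  qed
  have c2: "gen s br (U \<union> B) \<inter> C = gen s br ((B \<inter> C) \<union> U)"
    if B: "lie_subalgebra s br B" and C: "lie_subalgebra s br C" and UC: "U \<subseteq> C" for B C
  proof
    let ?P = "{u + b | u b. u \<in> U \<and> b \<in> B}"
    let ?R = "gen s br ((B \<inter> C) \<union> U)"
    have G: "gen s br (U \<union> B) = ?P" by (rule qi_gen[OF qi B])
    have sB: "subspace B" and sC: "subspace C" using B C sub_subspace by auto
    have "(B \<inter> C) \<union> U \<subseteq> ?P \<inter> C"
    proof -
      have "U \<subseteq> ?P" by (rule sum_left[OF sB])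
      moreover have "B \<subseteq> ?P" by (rule sum_right[OF sU])
      ultimately show ?thesis using UC by blast
    qed
    then have "?R \<subseteq> ?P \<inter> C"
      using gen_least[OF sub_Int[OF qi_sum_sub[OF qi B] C]] by blast
    then show "?R \<subseteq> gen s br (U \<union> B) \<inter> C" unfolding G .
    show "gen s br (U \<union> B) \<inter> C \<subseteq> ?R"
    proof
      fix z assume "z \<in> gen s br (U \<union> B) \<inter> C"
      then have zP: "z \<in> ?P" and zC: "z \<in> C" unfolding G by auto
      from zP obtain u b where z0: "z = u + b" "u \<in> U" "b \<in> B" by blast
      note z = z0 zC
      have uC: "u \<in> C" using UC z(2) by blast
      have "u + b - u \<in> C" using subspace_diff[OF sC z(4) uC] z(1) by simp
      then have bC: "b \<in> C" by simp
      have "u \<in> ?R" using gen_incl[of "(B \<inter> C) \<union> U"] z(2) by blast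
      moreover have "b \<in> ?R" using gen_incl[of "(B \<inter> C) \<union> U"] z(3) bC by blast
      ultimately show "z \<in> ?R" unfolding z(1) by (rule subspace_add[OF sub_subspace[OF gen_sub]])
    qed
  qed
  show ?thesis unfolding modular_def
  proof (intro conjI allI impI)
    fix B C assume "lie_subalgebra s br B \<and> lie_subalgebra s br C \<and> B \<subseteq> C"
    then show "gen s br (U \<union> B) \<inter> C = gen s br (B \<union> (U \<inter> C))" using c1 by blast
  next
    fix B C assume "lie_subalgebra s br B \<and> lie_subalgebra s br C \<and> U \<subseteq> C"
    then show "gen s br (U \<union> B) \<inter> C = gen s br ((B \<inter> C) \<union> U)" using c2 by blast
  qed
qed


lemma modular_imp_um:
  assumes U: "lie_subalgebra s br U" and m: "modular s br U"
  shows "upper_modular s br U"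
  unfolding upper_modular_def
proof (intro allI impI)
  fix B assume "lie_subalgebra s br B \<and> covers s br B (U \<inter> B)"
  then have B: "lie_subalgebra s br B" and cov: "covers s br B (U \<inter> B)" by auto
  let ?G = "gen s br (U \<union> B)"
  have UG: "U \<subseteq> ?G" using gen_incl[of "U \<union> B"] by blast
  have BG: "B \<subseteq> ?G" using gen_incl[of "U \<union> B"] by blast
  have ne: "?G \<noteq> U"
  proof
    assume "?G = U"
    then have "B \<subseteq> U" using BG by simp
    then have "U \<inter> B = B" by blast
    then show False using cov unfolding covers_def by blast
  qed
  have max: "C = U \<or> C = ?G" if C: "lie_subalgebra s br C" and UC: "U \<subseteq> C" and CG: "C \<subseteq> ?G" for C
  proof -
    have eq: "?G \<inter> C = gen s br ((B \<inter> C) \<union> U)"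
      using m B C UC unfolding modular_def by blast
    have GC: "?G \<inter> C = C" using CG by blast
    have "B \<inter> C = U \<inter> B \<or> B \<inter> C = B"
      using cov sub_Int[OF B C] UC unfolding covers_def by blast
    then show ?thesis
    proof
      assume "B \<inter> C = U \<inter> B"
      then have "(B \<inter> C) \<union> U = U" by blast
      then have "C = gen s br U" using eq GC by simp
      then show ?thesis using gen_id[OF U] by simp
    next
      assume "B \<inter> C = B"
      then have "(B \<inter> C) \<union> U = U \<union> B" by blast
      then show ?thesis using eq GC by simp
    qed
  qed
  show "covers s br ?G U" unfolding covers_def
    using U gen_sub UG ne max by blast
qed

lemma modular_imp_lm:
  assumes U: "lie_subalgebra s br U" and m: "modular s br U"
  shows "lower_modular s br U"
  unfolding lower_modular_def
proof (intro allI impI)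
  fix B assume "lie_subalgebra s br B \<and> covers s br (gen s br (U \<union> B)) U"
  then have B: "lie_subalgebra s br B" and cov: "covers s br (gen s br (U \<union> B)) U" by auto
  let ?G = "gen s br (U \<union> B)"
  have BG: "B \<subseteq> ?G" using gen_incl[of "U \<union> B"] by blast
  have ne: "U \<inter> B \<noteq> B"
  proof
    assume "U \<inter> B = B"
    then have "U \<union> B = U" by blast
    then have "?G = U" using gen_id[OF U] by simp
    then show False using cov unfolding covers_def by blast
  qed
  have max: "C = U \<inter> B \<or> C = B" if C: "lie_subalgebra s br C" and UC: "U \<inter> B \<subseteq> C" and CB: "C \<subseteq> B" for C
  proof -
    have eq: "gen s br (U \<union> C) \<inter> B = gen s br (C \<union> (U \<inter> B))"
      using m B C CB unfolding modular_def by blast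
    have "C \<union> (U \<inter> B) = C" using UC by blast
    then have eq2: "gen s br (U \<union> C) \<inter> B = C" using eq gen_id[OF C] by simp
    have "U \<subseteq> gen s br (U \<union> C)" using gen_incl[of "U \<union> C"] by blast
    moreover have "gen s br (U \<union> C) \<subseteq> ?G" using CB by (intro gen_mono) blast
    ultimately have "gen s br (U \<union> C) = U \<or> gen s br (U \<union> C) = ?G"
      using cov gen_sub unfolding covers_def by blast
    then show ?thesis
    proof
      assume "gen s br (U \<union> C) = U"
      then show ?thesis using eq2 by blast
    next
      assume "gen s br (U \<union> C) = ?G"
      then show ?thesis using eq2 BG by blast
    qed
  qed
  show "covers s br B (U \<inter> B)" unfolding covers_def
    using sub_Int[OF U B] B ne max by blast
qed


lemma sm_key:
  assumes U: "lie_subalgebra s br U" and solv: "solvable_lie s br" and sm: "semi_modular s br U"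
    and x: "x \<notin> U" and u: "u \<in> U"
  shows "br u x \<in> span (insert x U)"
proof -
  have sU: "subspace U" using U sub_subspace by auto
  have spanU: "span U = U" using span_eq_iff[THEN iffD2, OF sU] .
  define B where "B = span {x}"
  have Bsub: "lie_subalgebra s br B" unfolding B_def
    by (rule span_closed) (simp add: br_alt span_zero)
  have xB: "x \<in> B" unfolding B_def by (rule span_base) simp
  have cov1: "covers s br B (U \<inter> B)"
    unfolding covers_def
  proof (intro conjI allI impI)
    show "lie_subalgebra s br (U \<inter> B)" by (rule sub_Int[OF U Bsub])
    show "lie_subalgebra s br B" by (rule Bsub)
    show "U \<inter> B \<subset> B" using xB x by blast
    fix C assume "lie_subalgebra s br C \<and> U \<inter> B \<subseteq> C \<and> C \<subseteq> B"
    then have C: "lie_subalgebra s br C" and UBC: "U \<inter> B \<subseteq> C" and CB: "C \<subseteq> B" by auto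
    show "C = U \<inter> B \<or> C = B"
    proof (cases "C \<subseteq> U")
      case True then show ?thesis using UBC CB by blast
    next
      case False
      then obtain c where c: "c \<in> C" "c \<notin> U" by blast
      then have "c \<in> B" using CB by blast
      then obtain k where k: "c = s k x" unfolding B_def span_singleton by blast
      have "k \<noteq> 0" using k c subspace_0[OF sU] by auto
      then have "x = s (inverse k) c" using k by simp
      then have "x \<in> C" using subspace_scale[OF sub_subspace[OF C] c(1)] by simp
      then have "B \<subseteq> C" unfolding B_def using sub_subspace[OF C] by (intro span_minimal) auto
      then show ?thesis using CB by blast
    qed
  qed
  define M where "M = gen s br (U \<union> B)"
  have covM: "covers s br M U" using sm Bsub cov1 unfolding semi_modular_def upper_modular_def M_def by blast
  have Msub: "lie_subalgebra s br M" unfolding M_def by (rule gen_sub)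
  have sM: "subspace M" by (rule sub_subspace[OF Msub])
  have UM: "U \<subseteq> M" using covM unfolding covers_def by blast
  have xM: "x \<in> M" using gen_incl[of "U \<union> B"] xB unfolding M_def by blast
  define K where "K = {k. derived_series s br k \<inter> M \<subseteq> U}"
  obtain n where n: "derived_series s br n = {0}" using solv unfolding solvable_lie_def by blast
  have nK: "n \<in> K" using n subspace_0[OF sU] unfolding K_def by auto
  define m where "m = (LEAST k. k \<in> K)"
  have mK: "m \<in> K" unfolding m_def by (rule LeastI[of "\<lambda>k. k \<in> K", OF nK])
  have m0: "m \<noteq> 0"
  proof
    assume "m = 0"
    then have "M \<subseteq> U" using mK unfolding K_def by simp
    then show False using xM x by blast
  qed
  then obtain k where mk: "m = Suc k" using not0_implies_Suc by blast
  have "k \<notin> K"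
  proof
    assume "k \<in> K"
    then have "m \<le> k" unfolding m_def by (rule Least_le)
    then show False using mk by simp
  qed
  define A where "A = derived_series s br k \<inter> M"
  have AU: "\<not> A \<subseteq> U" using \<open>k \<notin> K\<close> unfolding K_def A_def by blast
  have AM: "A \<subseteq> M" unfolding A_def by blast
  have Did: "lie_subalgebra s br (derived_series s br k)"
    unfolding lie_subalgebra_def using derived_subspace derived_ideal by blast
  have Asub: "lie_subalgebra s br A" unfolding A_def by (rule sub_Int[OF Did Msub])
  have sA: "subspace A" by (rule sub_subspace[OF Asub])
  have Aid: "br y a \<in> A" if "y \<in> M" "a \<in> A" for y a
    using that derived_ideal sub_closed[OF Msub] unfolding A_def by blast
  have AA: "br a b \<in> U" if "a \<in> A" "b \<in> A" for a b
  proof -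
    have "br a b \<in> derived_series s br m" unfolding mk using that unfolding A_def by (intro derived_step) auto
    moreover have "br a b \<in> M" using that AM sub_closed[OF Msub] by blast
    ultimately show ?thesis using mK unfolding K_def by blast
  qed
  let ?G = "gen s br (U \<union> A)"
  have UG: "U \<subseteq> ?G" and AG: "A \<subseteq> ?G" using gen_incl[of "U \<union> A"] by blast+
  have GM: "?G \<subseteq> M" using UM AM by (intro gen_least[OF Msub]) blast
  have "?G = U \<or> ?G = M" using covM gen_sub UG GM unfolding covers_def by blast
  moreover have "?G \<noteq> U" using AG AU by blast
  ultimately have genA: "?G = M" by blast
  have covA: "covers s br A (U \<inter> A)"
    using sm Asub covM genA unfolding semi_modular_def lower_modular_def by metis
  obtain a where a: "a \<in> A" "a \<notin> U" using AU by blast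
  define S where "S = span (insert a (U \<inter> A))"
  have SA: "S \<subseteq> A" unfolding S_def using a sA by (intro span_minimal) auto
  have Ssub: "lie_subalgebra s br S" unfolding S_def
  proof (rule span_closed)
    fix w t assume "w \<in> insert a (U \<inter> A)" "t \<in> insert a (U \<inter> A)"
    then have "w \<in> A" "t \<in> A" using a by auto
    then have "br w t \<in> U \<inter> A" using AA sub_closed[OF Asub] by blast
    then show "br w t \<in> span (insert a (U \<inter> A))" by (intro span_base) blast
  qed
  have "S = U \<inter> A \<or> S = A"
    using covA Ssub SA span_superset[of "insert a (U \<inter> A)"] unfolding covers_def S_def by blast
  moreover have "a \<in> S" unfolding S_def by (intro span_base) simp
  ultimately have SA_eq: "S = A" using a by blast
  define T where "T = span (insert a U)"
  have ST: "S \<subseteq> T" unfolding S_def T_def by (intro span_mono) blast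
  have Tsub: "lie_subalgebra s br T" unfolding T_def
  proof (rule span_closed)
    fix w t assume w: "w \<in> insert a U" and t: "t \<in> insert a U"
    show "br w t \<in> span (insert a U)"
    proof (cases "w = a")
      case wa: True
      show ?thesis
      proof (cases "t = a")
        case True then show ?thesis using wa by (simp add: br_alt span_zero)
      next
        case False
        then have "t \<in> U" using t by blast
        then have "br t a \<in> A" using Aid UM a by blast
        then have "br t a \<in> T" using SA_eq ST by blast
        then have "- br t a \<in> T" unfolding T_def by (rule span_neg)
        then show ?thesis using wa br_anti[of a t] unfolding T_def by simp
      qed
    next
      case False
      then have wU: "w \<in> U" using w by blast
      show ?thesis
      proof (cases "t = a")
        case True
        then have "br w t \<in> A" using Aid UM a wU by blast
        then show ?thesis using SA_eq ST unfolding T_def by blast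
      next
        case False
        then have "t \<in> U" using t by blast
        then have "br w t \<in> U" using wU sub_closed[OF U] by blast
        then show ?thesis by (intro span_base) blast
      qed
    qed
  qed
  have UT: "U \<subseteq> T" unfolding T_def by (intro subset_trans[OF _ span_superset]) blast
  have TM: "T \<subseteq> M" unfolding T_def using UM a AM sM by (intro span_minimal) auto
  have aT: "a \<in> T" unfolding T_def by (intro span_base) simp
  have "T = U \<or> T = M" using covM Tsub UT TM unfolding covers_def by blast
  then have TM_eq: "T = M" using aT a by blast
  have "x \<in> span (insert a U)" using xM TM_eq unfolding T_def by simp
  moreover have "x \<notin> span U" using x spanU by blast
  ultimately have ax: "a \<in> span (insert x U)" by (rule in_span_insert)
  have "T \<subseteq> span (insert x U)" unfolding T_def
    using ax span_superset[of "insert x U"] by (intro span_minimal) auto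
  moreover have "br u x \<in> M" using UM u xM sub_closed[OF Msub] by blast
  ultimately show ?thesis using TM_eq by blast
qed

lemma sm_imp_qi:
  assumes U: "lie_subalgebra s br U" and solv: "solvable_lie s br" and sm: "semi_modular s br U"
  shows "quasi_ideal s br U"
  unfolding quasi_ideal_def
proof (intro conjI allI impI)
  show "lie_subalgebra s br U" by (rule U)
  have sU: "subspace U" using U sub_subspace by auto
  fix V assume sV: "subspace V"
  let ?W = "{q + v | q v. q \<in> U \<and> v \<in> V}"
  have "{br q v | q v. q \<in> U \<and> v \<in> V} \<subseteq> ?W"
  proof
    fix z assume "z \<in> {br q v | q v. q \<in> U \<and> v \<in> V}"
    then obtain q v where z: "z = br q v" "q \<in> U" "v \<in> V" by blast
    show "z \<in> ?W"
    proof (cases "v \<in> U")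
      case True
      then have "z \<in> U" using z sub_closed[OF U] by blast
      then show ?thesis using sum_left[OF sV] by blast
    next
      case False
      then have "br q v \<in> span (insert v U)" using sm_key[OF U solv sm False z(2)] by simp
      then obtain c where c: "br q v - s c v \<in> span U" unfolding span_breakdown_eq by blast
      then have c': "br q v - s c v \<in> U" using span_eq_iff[THEN iffD2, OF sU] by simp
      have "s c v \<in> V" using subspace_scale[OF sV z(3)] .
      moreover have "z = (br q v - s c v) + s c v" using z by simp
      ultimately show ?thesis using c' by blast
    qed
  qed
  then show "span {br q v | q v. q \<in> U \<and> v \<in> V} \<subseteq> ?W"
    by (rule span_minimal[OF _ subspace_sums[OF sU sV]])
qed

end

theorem theorem2p3:
  fixes s :: "'k::field \<Rightarrow> 'v::ab_group_add \<Rightarrow> 'v"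
    and br :: "'v \<Rightarrow> 'v \<Rightarrow> 'v"
    and U :: "'v set"
  assumes "lie_algebra s br"
    and "fin_dim s"
    and "solvable_lie s br"
    and "lie_subalgebra s br U"
    and "U \<noteq> UNIV"
  shows "(modular s br U \<longleftrightarrow> semi_modular s br U)
       \<and> (semi_modular s br U \<longleftrightarrow> quasi_ideal s br U)"
proof -
  interpret L: lie_ctx s br by unfold_locales (rule assms(1))
  have m_sm: "modular s br U \<Longrightarrow> semi_modular s br U"
    unfolding semi_modular_def using L.modular_imp_um L.modular_imp_lm assms(4) by blast
  have sm_qi: "semi_modular s br U \<Longrightarrow> quasi_ideal s br U"
    using L.sm_imp_qi assms(3,4) by blast
  have qi_m: "quasi_ideal s br U \<Longrightarrow> modular s br U"
    using L.qi_imp_modular by blast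
  show ?thesis using m_sm sm_qi qi_m by blast
qed

end
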